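(* Let $U\in\mathbb{R}^{n\times d}$, let $\mathbf{x}_*\in\mathbb{R}^d$ be $s$-sparse, $\mathbf{e}\in\mathbb{R}^n$ and $\mathbf{y}=U\mathbf{x}_*+\mathbf{e}$. Let $\mathbf{x}_t$ be an iterate of Algorithm 1 and $\mathbf{x}_{t+1}$ the next iterate; let $\mathcal{S}_t,\mathcal{S}_{t+1},\mathcal{S}_*$ be the supports of $\mathbf{x}_t,\mathbf{x}_{t+1},\mathbf{x}_*$. If $|\mathcal{S}_t\setminus\mathcal{S}_*|\le s$ and $\lambda_t\ge\|U^\top\mathbf{e}\|_\infty+\frac{\delta_s+\sqrt2\theta_{s,s}}{\sqrt s}\|\mathbf{x}_t-\mathbf{x}_*\|_2$, then $|\mathcal{S}_{t+1}\setminus\mathcal{S}_*|\le s$ and $|\mathcal{S}_*\cup\mathcal{S}_t\cup\mathcal{S}_{t+1}|\le3s$.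
   Context: $U_{\mathcal T}$ is the column submatrix of $U$ indexed by $\mathcal T$. $\delta_s$ is the smallest constant $\ge0$ with $(1-\delta_s)\|\mathbf{v}\|_2^2\le\|U_{\mathcal T}\mathbf{v}\|_2^2\le(1+\delta_s)\|\mathbf{v}\|_2^2$ for all $|\mathcal T|\le s$, $\mathbf{v}\in\mathbb{R}^{|\mathcal T|}$; $\theta_{s,s}$ (with $2s\le d$) is the smallest constant with $|\langle U_{\mathcal T}\mathbf{v},U_{\mathcal T'}\mathbf{v}'\rangle|\le\theta_{s,s}\|\mathbf{v}\|_2\|\mathbf{v}'\|_2$ for all disjoint $\mathcal T,\mathcal T'$ of size at most $s$. Algorithm 1: $\mathbf{x}_1=0$ and $\mathbf{x}_{t+1}=\mathrm{sign}(\widehat{\mathbf{x}}_t)[|\widehat{\mathbf{x}}_t|-\lambda_t]_+$ with $\widehat{\mathbf{x}}_t=\mathbf{x}_t-U^\top(U\mathbf{x}_t-\mathbf{y})$ (componentwise), for parameters $\lambda_t>0$. *)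

theory Defs
  imports "HOL-Analysis.Analysis"
begin

definition supp :: "real^'d \<Rightarrow> 'd set" where
  "supp x = {i. x $ i \<noteq> 0}"

text \<open>A vector
  v indexed by T corresponds to a vector w in R^d supported in T, with U_T v = U w.\<close>
definition rip_const :: "real^'d^'n \<Rightarrow> nat \<Rightarrow> real" where
  "rip_const U s = Inf {\<delta>. \<delta> \<ge> 0 \<and>
     (\<forall>T w. card T \<le> s \<and> supp w \<subseteq> T \<longrightarrow>
        (1 - \<delta>) * (norm w)\<^sup>2 \<le> (norm (U *v w))\<^sup>2 \<and>
        (norm (U *v w))\<^sup>2 \<le> (1 + \<delta>) * (norm w)\<^sup>2)}"

definition roc_const :: "real^'d^'n \<Rightarrow> nat \<Rightarrow> real" where
  "roc_const U s = Inf {\<theta>.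
     (\<forall>T T' w w'. card T \<le> s \<and> card T' \<le> s \<and> T \<inter> T' = {} \<and>
        supp w \<subseteq> T \<and> supp w' \<subseteq> T' \<longrightarrow>
        \<bar>(U *v w) \<bullet> (U *v w')\<bar> \<le> \<theta> * norm w * norm w')}"

definition ista_step :: "real^'d^'n \<Rightarrow> real^'n \<Rightarrow> real \<Rightarrow> real^'d \<Rightarrow> real^'d" where
  "ista_step U y lam x =
     (let xh = x - transpose U *v (U *v x - y)
      in \<chi> i. sgn (xh $ i) * max (\<bar>xh $ i\<bar> - lam) 0)"

end

theory Submission
  imports Defs
begin

lemma U_bound:
  fixes U :: "real^'d^'n"
  obtains B where "B > 0" "\<And>x. norm (U *v x) \<le> B * norm x"
  using linear_bounded_pos[OF matrix_vector_mul_linear[of U]] by blast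

lemma rip_set_nonempty:
  fixes U :: "real^'d^'n"
  shows "{\<delta>. \<delta> \<ge> 0 \<and>
     (\<forall>T w. card T \<le> s \<and> supp w \<subseteq> T \<longrightarrow>
        (1 - \<delta>) * (norm w)\<^sup>2 \<le> (norm (U *v w))\<^sup>2 \<and>
        (norm (U *v w))\<^sup>2 \<le> (1 + \<delta>) * (norm w)\<^sup>2)} \<noteq> {}"
proof -
  obtain B where B: "B > 0" "\<And>x. norm (U *v x) \<le> B * norm x" using U_bound by blast
  have "\<And>w. (norm (U *v w))\<^sup>2 \<le> B\<^sup>2 * (norm w)\<^sup>2"
    by (metis B(2) norm_ge_zero power_mono power_mult_distrib)
  hence UB: "\<And>w. (norm (U *v w))\<^sup>2 \<le> B\<^sup>2 * (norm w)\<^sup>2" .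
  have key: "\<forall>T w. card T \<le> s \<and> supp w \<subseteq> T \<longrightarrow>
        (1 - (1 + B\<^sup>2)) * (norm w)\<^sup>2 \<le> (norm (U *v w))\<^sup>2 \<and>
        (norm (U *v w))\<^sup>2 \<le> (1 + (1 + B\<^sup>2)) * (norm w)\<^sup>2"
  proof (intro allI impI)
    fix T and w :: "real^'d"
    have a: "0 \<le> B\<^sup>2 * (norm w)\<^sup>2" by simp
    have b: "(norm (U *v w))\<^sup>2 \<le> B\<^sup>2 * (norm w)\<^sup>2" by (rule UB)
    have c: "0 \<le> (norm w)\<^sup>2" by simp
    have d: "0 \<le> (norm (U *v w))\<^sup>2" by simp
    show "(1 - (1 + B\<^sup>2)) * (norm w)\<^sup>2 \<le> (norm (U *v w))\<^sup>2 \<and>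
          (norm (U *v w))\<^sup>2 \<le> (1 + (1 + B\<^sup>2)) * (norm w)\<^sup>2"
      apply (simp add: algebra_simps) using a b c d by linarith
  qed
  have "1 + B\<^sup>2 \<in> {\<delta>. \<delta> \<ge> 0 \<and>
     (\<forall>T w. card T \<le> s \<and> supp w \<subseteq> T \<longrightarrow>
        (1 - \<delta>) * (norm w)\<^sup>2 \<le> (norm (U *v w))\<^sup>2 \<and>
        (norm (U *v w))\<^sup>2 \<le> (1 + \<delta>) * (norm w)\<^sup>2)}"
    unfolding mem_Collect_eq using key by (intro conjI) simp_all
  thus ?thesis by blast
qed

lemma rip_nonneg: "0 \<le> rip_const (U::real^'d^'n) s"
  unfolding rip_const_def
  by (rule cInf_greatest[OF rip_set_nonempty]) auto

lemma rip_prop: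
  fixes U :: "real^'d^'n"
  assumes "card T \<le> s" "supp w \<subseteq> T"
  shows "(1 - rip_const U s) * (norm w)\<^sup>2 \<le> (norm (U *v w))\<^sup>2 \<and>
        (norm (U *v w))\<^sup>2 \<le> (1 + rip_const U s) * (norm w)\<^sup>2"
proof (cases "w = 0")
  case True then show ?thesis by simp
next
  case False
  hence p: "(norm w)\<^sup>2 > 0" by simp
  define a where "a = (norm (U *v w))\<^sup>2"
  define b where "b = (norm w)\<^sup>2"
  have h1: "1 - a / b \<le> rip_const U s"
    unfolding rip_const_def
  proof (rule cInf_greatest[OF rip_set_nonempty], clarify)
    fix x assume "0 \<le> x" and H: "\<forall>T w. card T \<le> s \<and> supp w \<subseteq> T \<longrightarrow>
            (1 - x) * (norm w)\<^sup>2 \<le> (norm (U *v w))\<^sup>2 \<and> (norm (U *v w))\<^sup>2 \<le> (1 + x) * (norm w)\<^sup>2"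
    have "(1 - x) * b \<le> a" using H assms unfolding a_def b_def by blast
    thus "1 - a / b \<le> x" using p unfolding b_def by (simp add: field_simps)
  qed
  have h2: "a / b - 1 \<le> rip_const U s"
    unfolding rip_const_def
  proof (rule cInf_greatest[OF rip_set_nonempty], clarify)
    fix x assume "0 \<le> x" and H: "\<forall>T w. card T \<le> s \<and> supp w \<subseteq> T \<longrightarrow>
            (1 - x) * (norm w)\<^sup>2 \<le> (norm (U *v w))\<^sup>2 \<and> (norm (U *v w))\<^sup>2 \<le> (1 + x) * (norm w)\<^sup>2"
    have "a \<le> (1 + x) * b" using H assms unfolding a_def b_def by blast
    thus "a / b - 1 \<le> x" using p unfolding b_def by (simp add: field_simps)
  qed
  have "(1 - rip_const U s) * b \<le> a" using h1 p unfolding b_def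
    by (simp add: field_simps)
  moreover have "a \<le> (1 + rip_const U s) * b" using h2 p unfolding b_def
    by (simp add: field_simps)
  ultimately show ?thesis unfolding a_def b_def by simp
qed

lemma roc_set_nonempty:
  fixes U :: "real^'d^'n"
  shows "{\<theta>.
     (\<forall>T T' w w'. card T \<le> s \<and> card T' \<le> s \<and> T \<inter> T' = {} \<and>
        supp w \<subseteq> T \<and> supp w' \<subseteq> T' \<longrightarrow>
        \<bar>(U *v w) \<bullet> (U *v w')\<bar> \<le> \<theta> * norm w * norm w')} \<noteq> {}"
proof -
  obtain B where B: "B > 0" "\<And>x. norm (U *v x) \<le> B * norm x" using U_bound by blast
  have "\<And>w w'. \<bar>(U *v w) \<bullet> (U *v w')\<bar> \<le> B\<^sup>2 * norm w * norm w'"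
  proof -
    fix w w' :: "real^'d"
    have "\<bar>(U *v w) \<bullet> (U *v w')\<bar> \<le> norm (U *v w) * norm (U *v w')"
      by (rule Cauchy_Schwarz_ineq2)
    also have "\<dots> \<le> (B * norm w) * (B * norm w')"
      by (rule mult_mono) (use B in auto)
    finally show "\<bar>(U *v w) \<bullet> (U *v w')\<bar> \<le> B\<^sup>2 * norm w * norm w'"
      by (simp add: power2_eq_square algebra_simps)
  qed
  thus ?thesis by blast
qed

lemma roc_prop:
  fixes U :: "real^'d^'n"
  assumes "card T \<le> s" "card T' \<le> s" "T \<inter> T' = {}" "supp w \<subseteq> T" "supp w' \<subseteq> T'"
  shows "\<bar>(U *v w) \<bullet> (U *v w')\<bar> \<le> roc_const U s * norm w * norm w'"
proof (cases "w = 0 \<or> w' = 0")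
  case True then show ?thesis by auto
next
  case False
  hence p: "norm w * norm w' > 0" by simp
  define a where "a = \<bar>(U *v w) \<bullet> (U *v w')\<bar>"
  have "a / (norm w * norm w') \<le> roc_const U s"
    unfolding roc_const_def
  proof (rule cInf_greatest[OF roc_set_nonempty], clarify)
    fix x assume H: "\<forall>T T' w w'. card T \<le> s \<and> card T' \<le> s \<and> T \<inter> T' = {} \<and>
        supp w \<subseteq> T \<and> supp w' \<subseteq> T' \<longrightarrow>
        \<bar>(U *v w) \<bullet> (U *v w')\<bar> \<le> x * norm w * norm w'"
    have "a \<le> x * (norm w * norm w')" using H assms unfolding a_def
      by (metis mult.assoc)
    thus "a / (norm w * norm w') \<le> x" using p by (simp add: field_simps)
  qed
  thus ?thesis using p unfolding a_def by (simp add: field_simps)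
qed


lemma roc_nonneg:
  fixes U :: "real^'d^'n"
  assumes "1 \<le> s" "2 \<le> CARD('d)"
  shows "0 \<le> roc_const U s"
proof -
  obtain i j :: 'd where ij: "i \<noteq> j"
  proof -
    have "\<not> (\<forall>i j::'d. i = j)"
    proof
      assume "\<forall>i j::'d. i = j"
      hence "(UNIV::'d set) \<subseteq> {undefined}" by auto
      hence "CARD('d) \<le> 1" by (metis card.empty card_insert_if card_mono finite.emptyI finite.insertI insert_absorb insert_not_empty le_numeral_extra(4) One_nat_def card_Suc_eq)
      with assms show False by simp
    qed
    thus ?thesis using that by blast
  qed
  have si: "supp (axis i (1::real)) \<subseteq> {i}" unfolding supp_def by (auto simp: axis_def)
  have sj: "supp (axis j (1::real)) \<subseteq> {j}" unfolding supp_def by (auto simp: axis_def)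
  show ?thesis unfolding roc_const_def
  proof (rule cInf_greatest[OF roc_set_nonempty], clarify)
    fix x assume H: "\<forall>T T' w w'. card T \<le> s \<and> card T' \<le> s \<and> T \<inter> T' = {} \<and>
        supp w \<subseteq> T \<and> supp w' \<subseteq> T' \<longrightarrow>
        \<bar>(U *v w) \<bullet> (U *v w')\<bar> \<le> x * norm w * norm w'"
    have "\<bar>(U *v axis i 1) \<bullet> (U *v axis j 1)\<bar> \<le> x * norm (axis i (1::real)) * norm (axis j (1::real))"
      using H[rule_format, of "{i}" "{j}" "axis i 1" "axis j 1"] si sj ij assms(1) by auto
    thus "0 \<le> x" by simp
  qed
qed

lemma supp_add: "supp (x + y) \<subseteq> supp x \<union> supp y"
  unfolding supp_def by auto
lemma supp_diff: "supp (x - y) \<subseteq> supp x \<union> supp y"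
  unfolding supp_def by auto
lemma supp_scale: "supp (c *\<^sub>R x) \<subseteq> supp x"
  unfolding supp_def by auto

lemma inner_disj: "supp x \<inter> supp y = {} \<Longrightarrow> x \<bullet> y = 0"
  unfolding inner_vec_def supp_def
  by (rule sum.neutral) auto

lemma rip_inner_sum:
  fixes U :: "real^'d^'n"
  assumes "card T \<le> s" "supp w \<subseteq> T" "supp v \<subseteq> T"
  shows "\<bar>w \<bullet> v - (U *v w) \<bullet> (U *v v)\<bar> \<le> rip_const U s * ((norm w)\<^sup>2 + (norm v)\<^sup>2) / 2"
proof -
  let ?d = "rip_const U s"
  have sa: "supp (w + v) \<subseteq> T" using supp_add assms by blast
  have sb: "supp (w - v) \<subseteq> T" using supp_diff assms by blast
  note A = rip_prop[OF assms(1) sa, of U]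
  note B = rip_prop[OF assms(1) sb, of U]
  have e1: "4 * (w \<bullet> v) = (norm (w + v))\<^sup>2 - (norm (w - v))\<^sup>2"
    by (simp add: power2_norm_eq_inner algebra_simps inner_commute)
  have e2: "4 * ((U *v w) \<bullet> (U *v v)) = (norm (U *v (w + v)))\<^sup>2 - (norm (U *v (w - v)))\<^sup>2"
    by (simp add: power2_norm_eq_inner algebra_simps inner_commute)
  have e3: "(norm (w + v))\<^sup>2 + (norm (w - v))\<^sup>2 = 2 * ((norm w)\<^sup>2 + (norm v)\<^sup>2)"
    by (simp add: power2_norm_eq_inner algebra_simps inner_commute)
  have P: "\<bar>4 * (w \<bullet> v - (U *v w) \<bullet> (U *v v))\<bar> \<le> ?d * ((norm (w + v))\<^sup>2 + (norm (w - v))\<^sup>2)"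
    using A B e1 e2 by (simp add: algebra_simps) linarith
  define S where "S = (norm w)\<^sup>2 + (norm v)\<^sup>2"
  define X where "X = w \<bullet> v - (U *v w) \<bullet> (U *v v)"
  have "\<bar>4 * X\<bar> \<le> ?d * (2 * S)" using P unfolding X_def S_def by (simp only: e3)
  hence "4 * \<bar>X\<bar> \<le> 2 * (?d * S)" by (simp add: abs_mult)
  hence "\<bar>X\<bar> \<le> ?d * S / 2" by (simp add: mult.commute)
  thus ?thesis unfolding X_def S_def .
qed

lemma rip_inner:
  fixes U :: "real^'d^'n"
  assumes "card T \<le> s" "supp w \<subseteq> T" "supp v \<subseteq> T"
  shows "\<bar>w \<bullet> v - (U *v w) \<bullet> (U *v v)\<bar> \<le> rip_const U s * norm w * norm v"
proof (cases "w = 0 \<or> v = 0")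
  case True then show ?thesis by auto
next
  case False
  define p where "p = norm w"
  define q where "q = norm v"
  have pq: "p > 0" "q > 0" using False unfolding p_def q_def by auto
  have s1: "supp (q *\<^sub>R w) \<subseteq> T" using supp_scale assms by blast
  have s2: "supp (p *\<^sub>R v) \<subseteq> T" using supp_scale assms by blast
  have "\<bar>(q *\<^sub>R w) \<bullet> (p *\<^sub>R v) - (U *v (q *\<^sub>R w)) \<bullet> (U *v (p *\<^sub>R v))\<bar>
      \<le> rip_const U s * ((norm (q *\<^sub>R w))\<^sup>2 + (norm (p *\<^sub>R v))\<^sup>2) / 2"
    by (rule rip_inner_sum[OF assms(1) s1 s2])
  also have "\<dots> = rip_const U s * (p * q) * (p * q)"
    using pq unfolding p_def q_def by (simp add: power2_eq_square algebra_simps)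
  finally have F: "\<bar>(q *\<^sub>R w) \<bullet> (p *\<^sub>R v) - (U *v (q *\<^sub>R w)) \<bullet> (U *v (p *\<^sub>R v))\<bar>
      \<le> rip_const U s * (p * q) * (p * q)" .
  have "(q *\<^sub>R w) \<bullet> (p *\<^sub>R v) - (U *v (q *\<^sub>R w)) \<bullet> (U *v (p *\<^sub>R v))
     = (p * q) * (w \<bullet> v - (U *v w) \<bullet> (U *v v))"
    by (simp add: matrix_vector_mult_scaleR algebra_simps)
  hence "\<bar>(q *\<^sub>R w) \<bullet> (p *\<^sub>R v) - (U *v (q *\<^sub>R w)) \<bullet> (U *v (p *\<^sub>R v))\<bar>
     = (p * q) * \<bar>w \<bullet> v - (U *v w) \<bullet> (U *v v)\<bar>" using pq by (simp add: abs_mult)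
  hence "(p * q) * \<bar>w \<bullet> v - (U *v w) \<bullet> (U *v v)\<bar> \<le> (p * q) * (rip_const U s * p * q)"
    using F by (simp add: algebra_simps)
  hence "\<bar>w \<bullet> v - (U *v w) \<bullet> (U *v v)\<bar> \<le> rip_const U s * p * q"
    using pq by (metis mult_left_le_imp_le mult_pos_pos)
  thus ?thesis unfolding p_def q_def .
qed

definition restr :: "'d set \<Rightarrow> real^'d \<Rightarrow> real^'d" where
  "restr A x = (\<chi> i. if i \<in> A then x $ i else 0)"

lemma supp_restr: "supp (restr A x) \<subseteq> A \<inter> supp x"
  unfolding supp_def restr_def by auto

lemma inner_restr: "x \<bullet> restr A y = (\<Sum>i\<in>A. x $ i * y $ i)"
  unfolding inner_vec_def restr_def
  by (simp add: if_distrib sum.If_cases)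

lemma transpose_inner: "(transpose U *v z) \<bullet> (w::real^'d) = z \<bullet> (U *v w)"
  by (simp add: dot_lmul_matrix)


lemma restr_apply: "restr A x $ i = (if i \<in> A then x $ i else 0)"
  unfolding restr_def by simp

theorem corollary2:
  fixes U :: "real^'d^'n" and xstar xt :: "real^'d" and e :: "real^'n"
    and s :: nat and lam :: real
  assumes "2 * s \<le> CARD('d)"
    and "card (supp xstar) \<le> s"
    and "lam > 0"
    and "card (supp xt - supp xstar) \<le> s"
    and "lam \<ge> infnorm (transpose U *v e)
               + (rip_const U s + sqrt 2 * roc_const U s) / sqrt (real s) * norm (xt - xstar)"
  shows "card (supp (ista_step U (U *v xstar + e) lam xt) - supp xstar) \<le> s
       \<and> card (supp xstar \<union> supp xt \<union> supp (ista_step U (U *v xstar + e) lam xt)) \<le> 3 * s"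
proof -
  define x1 where "x1 = ista_step U (U *v xstar + e) lam xt"
  define h where "h = xt - xstar"
  define g where "g = h - transpose U *v (U *v h)"
  define Ue where "Ue = transpose U *v e"
  define c where "c = rip_const U s + sqrt 2 * roc_const U s"
  define K where "K = c / sqrt (real s) * norm h"
  define Bad where "Bad = supp x1 - supp xstar"
  have lamK: "lam \<ge> infnorm Ue + K" using assms(5) unfolding Ue_def K_def c_def h_def .
  have xh: "xt - transpose U *v (U *v xt - (U *v xstar + e)) = g + Ue + xstar"
    unfolding g_def Ue_def h_def by (simp add: matrix_vector_mult_diff_distrib algebra_simps)
  have x1i: "x1 $ i = sgn ((g + Ue + xstar) $ i) * max (\<bar>(g + Ue + xstar) $ i\<bar> - lam) 0" for i
    unfolding x1_def ista_step_def Let_def xh by simp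
  have bad: "\<bar>g $ i\<bar> > K" if "i \<in> Bad" for i
  proof -
    have "x1 $ i \<noteq> 0" using that unfolding Bad_def supp_def by auto
    hence "\<bar>(g + Ue + xstar) $ i\<bar> > lam" unfolding x1i by (auto simp: max_def split: if_splits)
    moreover have "xstar $ i = 0" using that unfolding Bad_def supp_def by auto
    moreover have "\<bar>Ue $ i\<bar> \<le> infnorm Ue" by (rule component_le_infnorm_cart)
    ultimately show ?thesis using lamK by simp
  qed
  have fin: "finite (A::'d set)" for A by simp
  have part1: "card Bad \<le> s"
  proof (cases "s = 0")
    case True
    hence "supp xstar = {}" "supp xt - supp xstar = {}" using assms(2,4) by auto
    hence "h = 0" unfolding h_def supp_def by (auto simp: vec_eq_iff)
    hence "g = 0" unfolding g_def by simp
    moreover have "K = 0" unfolding K_def using \<open>h = 0\<close> by simp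
    ultimately have "Bad = {}" using bad by fastforce
    thus ?thesis by simp
  next
    case False
    hence s1: "1 \<le> s" by simp
    have c0: "c \<ge> 0" unfolding c_def
      using rip_nonneg[of U s] roc_nonneg[OF s1, of U] assms(1) s1 by simp
    show ?thesis
    proof (rule ccontr)
      assume "\<not> card Bad \<le> s"
      then obtain T where T: "T \<subseteq> Bad" "card T = s"
        by (meson obtain_subset_with_card_n not_le less_imp_le)
      have TS: "T \<inter> supp xstar = {}" using T unfolding Bad_def by auto
      define w where "w = restr T g"
      have suppw: "supp w \<subseteq> T" unfolding w_def using supp_restr by blast
      have Tne: "T \<noteq> {}" using T s1 by auto
      have nw2: "(norm w)\<^sup>2 = (\<Sum>i\<in>T. g $ i * g $ i)"
        unfolding power2_norm_eq_inner w_def inner_restr by (simp add: restr_apply)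
      have K0: "K \<ge> 0" unfolding K_def using c0 by simp
      have "(\<Sum>i\<in>T. K * K) < (\<Sum>i\<in>T. g $ i * g $ i)"
      proof (rule sum_strict_mono)
        fix i assume "i \<in> T"
        hence "\<bar>g $ i\<bar> > K" using bad T by auto
        hence "K * K < \<bar>g $ i\<bar> * \<bar>g $ i\<bar>" using K0 by (intro mult_strict_mono') auto
        thus "K * K < g $ i * g $ i" by (metis abs_mult_self_eq)
      qed (use Tne in auto)
      moreover have "(\<Sum>i\<in>T. K * K) = (c * norm h)\<^sup>2"
        using T(2) s1 unfolding K_def by (simp add: power2_eq_square field_simps)
      ultimately have big: "(norm w)\<^sup>2 > (c * norm h)\<^sup>2" using nw2 by simp
      define A where "A = supp xt - supp xstar - T"
      define h1 where "h1 = restr (supp xstar) h"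
      define h2 where "h2 = restr T h"
      define h3 where "h3 = restr A h"
      have hdec: "h = h1 + h2 + h3"
        unfolding h1_def h2_def h3_def A_def
        using TS by (auto simp: vec_eq_iff restr_apply h_def supp_def)
      have sh1: "supp h1 \<subseteq> supp xstar" unfolding h1_def using supp_restr by blast
      have sh2: "supp h2 \<subseteq> T" unfolding h2_def using supp_restr by blast
      have sh3: "supp h3 \<subseteq> A" unfolding h3_def using supp_restr by blast
      have cardA: "card A \<le> s" unfolding A_def using assms(4)
        by (meson Diff_subset card_mono fin le_trans)
      have gw: "g \<bullet> w = (norm w)\<^sup>2"
        unfolding power2_norm_eq_inner w_def inner_restr by (simp add: restr_apply)
      have "g \<bullet> w = h \<bullet> w - (U *v h) \<bullet> (U *v w)"
        unfolding g_def by (simp add: inner_diff_left dot_lmul_matrix)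
      also have "\<dots> = (h2 \<bullet> w - (U *v h2) \<bullet> (U *v w)) - (U *v h1) \<bullet> (U *v w) - (U *v h3) \<bullet> (U *v w)
           + h1 \<bullet> w + h3 \<bullet> w"
        by (subst (1 2) hdec) (simp add: matrix_vector_right_distrib inner_add_left algebra_simps)
      also have "h1 \<bullet> w = 0" using sh1 suppw TS by (intro inner_disj) blast
      also have "h3 \<bullet> w = 0" using sh3 suppw unfolding A_def by (intro inner_disj) blast
      finally have eq: "(norm w)\<^sup>2 = (h2 \<bullet> w - (U *v h2) \<bullet> (U *v w)) - (U *v h1) \<bullet> (U *v w) - (U *v h3) \<bullet> (U *v w)"
        using gw by simp
      have b2: "\<bar>h2 \<bullet> w - (U *v h2) \<bullet> (U *v w)\<bar> \<le> rip_const U s * norm h2 * norm w"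
        using rip_inner[of T s h2 w U] T(2) sh2 suppw by simp
      have b1: "\<bar>(U *v h1) \<bullet> (U *v w)\<bar> \<le> roc_const U s * norm h1 * norm w"
        using roc_prop[of "supp xstar" s T h1 w U] assms(2) T(2) TS sh1 suppw by (simp add: Int_commute)
      have b3: "\<bar>(U *v h3) \<bullet> (U *v w)\<bar> \<le> roc_const U s * norm h3 * norm w"
        using roc_prop[of A s T h3 w U] cardA T(2) sh3 suppw unfolding A_def by auto
      have wle: "(norm w)\<^sup>2 \<le> (rip_const U s * norm h2 + roc_const U s * (norm h1 + norm h3)) * norm w"
        using eq b1 b2 b3 by (simp add: algebra_simps)
      have o12: "h1 \<bullet> h2 = 0" using sh1 sh2 TS by (intro inner_disj) blast
      have o13: "h1 \<bullet> h3 = 0" using sh1 sh3 unfolding A_def by (intro inner_disj) blast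
      have o23: "h2 \<bullet> h3 = 0" using sh2 sh3 unfolding A_def by (intro inner_disj) blast
      have pyth: "(norm h)\<^sup>2 = (norm h1)\<^sup>2 + (norm h2)\<^sup>2 + (norm h3)\<^sup>2"
        apply (subst hdec)
        using o12 o13 o23 by (simp add: power2_norm_eq_inner inner_add_left inner_add_right inner_commute)
      have n2: "norm h2 \<le> norm h"
      proof (rule power2_le_imp_le)
        show "(norm h2)\<^sup>2 \<le> (norm h)\<^sup>2" using pyth by simp
      qed simp
      have "(norm h1 + norm h3)\<^sup>2 = (norm h1)\<^sup>2 + (norm h3)\<^sup>2 + 2 * norm h1 * norm h3"
        by (rule power2_sum)
      moreover have "2 * norm h1 * norm h3 \<le> (norm h1)\<^sup>2 + (norm h3)\<^sup>2" by (rule sum_squares_bound)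
      moreover have "0 \<le> (norm h2)\<^sup>2" by simp
      ultimately have "(norm h1 + norm h3)\<^sup>2 \<le> 2 * (norm h)\<^sup>2" using pyth by linarith
      also have "\<dots> = (sqrt 2 * norm h)\<^sup>2" by (simp add: power_mult_distrib)
      finally have n13: "norm h1 + norm h3 \<le> sqrt 2 * norm h"
        by (rule power2_le_imp_le) simp
      have th0: "roc_const U s \<ge> 0" using roc_nonneg[OF s1, of U] assms(1) s1 by simp
      have m1: "rip_const U s * norm h2 \<le> rip_const U s * norm h"
        using n2 rip_nonneg[of U s] by (rule mult_left_mono)
      have m2: "roc_const U s * (norm h1 + norm h3) \<le> roc_const U s * (sqrt 2 * norm h)"
        using n13 th0 by (rule mult_left_mono)
      have m3: "c * norm h = rip_const U s * norm h + roc_const U s * (sqrt 2 * norm h)"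
        unfolding c_def by (simp add: algebra_simps)
      have L: "rip_const U s * norm h2 + roc_const U s * (norm h1 + norm h3) \<le> c * norm h"
        using m1 m2 m3 by linarith
      have "(norm w)\<^sup>2 \<le> (c * norm h) * norm w"
        using wle mult_right_mono[OF L norm_ge_zero[of w]] by linarith
      hence W: "norm w * norm w \<le> (c * norm h) * norm w" by (simp add: power2_eq_square)
      have "0 \<le> (c * norm h)\<^sup>2" by simp
      hence "norm w \<noteq> 0" using big by auto
      hence "norm w > 0" by simp
      hence "norm w \<le> c * norm h" using W by (metis mult_right_le_imp_le)
      hence "(norm w)\<^sup>2 \<le> (c * norm h)\<^sup>2" by (simp add: power_mono)
      with big show False by simp
    qed
  qed
  have "supp xstar \<union> supp xt \<union> supp x1 = supp xstar \<union> (supp xt - supp xstar) \<union> Bad"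
    unfolding Bad_def by auto
  hence "card (supp xstar \<union> supp xt \<union> supp x1) \<le> card (supp xstar) + card (supp xt - supp xstar) + card Bad"
    by (metis card_Un_le fin le_trans add_le_mono1)
  with part1 assms(2,4) have "card (supp xstar \<union> supp xt \<union> supp x1) \<le> 3 * s" by simp
  with part1 show ?thesis unfolding x1_def Bad_def by simp
qed

end
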